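(* Assume $S\times M\neq\emptyset$, let $(x,\lambda):[t_0,+\infty[\ \to X\times Y$ be a solution of (AHT), and suppose that $\varepsilon\notin\mathcal{L}^1([t_0,+\infty[)$ and that either $\dot\varepsilon\in\mathcal{L}^1([t_0,+\infty[)$ or $|\dot\varepsilon|^2/\varepsilon\in\mathcal{L}^1([t_0,+\infty[)$. Then for every $(\bar x,\bar\lambda)\in S\times M$, \[ \lim_{t\to+\infty}\big(L(x(t),\bar\lambda)-L(\bar x,\lambda(t))\big)=0\quad\text{and}\quad\lim_{t\to+\infty}\|(\dot x(t),\dot\lambda(t))\|=0. \]
   Context: $X,Y$ are real Hilbert spaces; $X\times Y$ carries the product inner product and norm $\|\cdot\|$. Standing assumptions: $f:X\to\mathbb{R}$ is convex and continuously differentiable with $\nabla f$ Lipschitz continuous on bounded subsets of $X$; $A:X\to Y$ is linear and continuous with adjoint $A^*$; $b\in Y$; $\varepsilon:[t_0,+\infty[\ \to\ ]0,+\infty[$ ($t_0\ge0$) is continuously differentiable with $\lim_{t\to+\infty}\varepsilon(t)=0$. $L(x,\lambda)=f(x)+\langle\lambda,Ax-b\rangle_Y$. $S$ is the set of optimal solutions of $\min\{f(x):Ax=b\}$, $M$ the set of Lagrange multipliers; $S\times M$ is the set of saddle points of $L$. (AHT) is the system $\dot x+\nabla f(x)+A^*\lambda+\varepsilon(t)x=0$, $\dot\lambda+b-Ax+\varepsilon(t)\lambda=0$; a solution is a continuously differentiable $(x,\lambda):[t_0,+\infty[\ \to X\times Y$ satisfying it on $[t_0,+\infty[$ (existence and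 uniqueness for every initial datum is assumed). *)

theory Defs
  imports "HOL-Analysis.Analysis"
begin

definition lagr :: "('a::real_inner \<Rightarrow> real) \<Rightarrow> ('a \<Rightarrow> 'b::real_inner) \<Rightarrow> 'b \<Rightarrow> 'a \<Rightarrow> 'b \<Rightarrow> real" where
  "lagr f A b x l = f x + inner l (A x - b)"

definition opt_sol :: "('a::real_inner \<Rightarrow> real) \<Rightarrow> ('a \<Rightarrow> 'b::real_inner) \<Rightarrow> 'b \<Rightarrow> 'a set" where
  "opt_sol f A b = {xb. A xb = b \<and> (\<forall>x. A x = b \<longrightarrow> f xb \<le> f x)}"

definition lag_mult :: "('a::real_inner \<Rightarrow> real) \<Rightarrow> ('a \<Rightarrow> 'a) \<Rightarrow> ('a \<Rightarrow> 'b::real_inner)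
    \<Rightarrow> ('b \<Rightarrow> 'a) \<Rightarrow> 'b \<Rightarrow> 'b set" where
  "lag_mult f gf A As b = {l. \<forall>xb \<in> opt_sol f A b. gf xb + As l = 0}"

end

theory Submission
  imports Defs
begin


lemma barrier:
  fixes \<phi> :: "real \<Rightarrow> real"
  assumes at: "a \<le> t" and cont: "continuous_on {a..t} \<phi>" and pa: "\<phi> a \<le> R" and pt: "R < \<phi> t"
  shows "\<exists>s. a \<le> s \<and> s < t \<and> \<phi> s = R \<and> (\<forall>r\<in>{s..t}. R \<le> \<phi> r)"
proof -
  let ?S = "{r \<in> {a..t}. \<phi> r \<le> R}"
  have cl: "closed ?S"
    using continuous_on_closed_Collect_le[OF cont continuous_on_const] by simp
  have ne: "?S \<noteq> {}" using assms by auto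
  have bdd: "bdd_above ?S" by (rule bdd_aboveI[of _ t]) auto
  define s where "s = Sup ?S"
  have sS: "s \<in> ?S" using closed_contains_Sup[OF ne bdd cl] s_def by simp
  have above: "R < \<phi> r" if "r \<in> {s<..t}" for r
  proof (rule ccontr)
    assume "\<not> R < \<phi> r"
    then have "r \<in> ?S" using that sS by auto
    then have "r \<le> s" unfolding s_def by (rule cSup_upper[OF _ bdd])
    with that show False by auto
  qed
  have st: "s < t" using sS pt by (cases "s = t") auto
  have ps: "\<phi> s = R"
  proof (rule ccontr)
    assume "\<phi> s \<noteq> R" then have "\<phi> s < R" using sS by auto
    have c2: "continuous_on {s..t} \<phi>" by (rule continuous_on_subset[OF cont]) (use sS in auto)
    from IVT'[of \<phi> s R t, OF _ _ _ c2] \<open>\<phi> s < R\<close> pt st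
    obtain r where "r \<ge> s" "r \<le> t" "\<phi> r = R" by auto
    with above[of r] \<open>\<phi> s < R\<close> show False by (cases "r = s") auto
  qed
  have "\<forall>r\<in>{s..t}. R \<le> \<phi> r"
  proof
    fix r assume r: "r \<in> {s..t}"
    show "R \<le> \<phi> r"
    proof (cases "r = s")
      case True then show ?thesis using ps by simp
    next
      case False then have "r \<in> {s<..t}" using r by auto
      then show ?thesis using above[of r] by simp
    qed
  qed
  then show ?thesis
    using sS st ps by (intro exI[of _ s]) auto
qed

lemma decay:
  fixes G e \<rho> :: "real \<Rightarrow> real"
  assumes Gnn: "\<And>t. t \<ge> t0 \<Longrightarrow> G t \<ge> 0"
    and epos: "\<And>t. t \<ge> t0 \<Longrightarrow> e t > 0"
    and Gc: "continuous_on {t0..} G" and ec: "continuous_on {t0..} e"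
    and \<rho>c: "continuous_on {t0..} \<rho>"
    and \<rho>nn: "\<And>t. t \<ge> t0 \<Longrightarrow> \<rho> t \<ge> 0"
    and \<rho>bd: "\<And>t. t \<ge> t0 \<Longrightarrow> integral {t0..t} \<rho> \<le> L"
    and eunb: "\<And>B. \<exists>t\<ge>t0. integral {t0..t} e > B"
    and ineq: "\<And>s t. t0 \<le> s \<Longrightarrow> s \<le> t \<Longrightarrow>
                 G t \<le> G s - integral {s..t} (\<lambda>r. e r * G r) + integral {s..t} \<rho>"
  shows "(G \<longlongrightarrow> 0) at_top"
proof -
  have intg: "f integrable_on {s..t}" if "continuous_on {t0..} f" "t0 \<le> s" for f :: "real \<Rightarrow> real" and s t
    by (rule integrable_continuous_interval, rule continuous_on_subset[OF that(1)]) (use that in auto)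
  have eGc: "continuous_on {t0..} (\<lambda>r. e r * G r)" using ec Gc by (intro continuous_intros)
  define P where "P t = integral {t0..t} \<rho>" for t
  have Pcomb: "P t = P s + integral {s..t} \<rho>" if "t0 \<le> s" "s \<le> t" for s t
    unfolding P_def using Henstock_Kurzweil_Integration.integral_combine[OF that intg[OF \<rho>c order_refl]]
    by simp
  have ipos: "integral {s..t} \<rho> \<ge> 0" if "t0 \<le> s" for s t
    by (rule integral_nonneg[OF intg[OF \<rho>c that]]) (use that \<rho>nn in auto)
  define Lp where "Lp = Sup (P ` {t0..})"
  have bddP: "bdd_above (P ` {t0..})" using \<rho>bd unfolding P_def by (intro bdd_aboveI[of _ L]) auto
  have PLp: "P t \<le> Lp" if "t \<ge> t0" for t
    unfolding Lp_def using that by (intro cSup_upper bddP) auto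
  show ?thesis
  proof (rule tendstoI)
    fix \<delta> :: real assume \<delta>: "\<delta> > 0"
    have "Lp - \<delta>/3 < Lp" using \<delta> by simp
    then obtain T1 where T1: "T1 \<ge> t0" "P T1 > Lp - \<delta>/3"
      unfolding Lp_def by (rule less_cSupE) auto
    have tail: "integral {s..t} \<rho> < \<delta>/3" if "T1 \<le> s" "s \<le> t" for s t
    proof -
      have "P s \<ge> P T1" using Pcomb[of T1 s] ipos[of T1 s] T1 that by linarith
      moreover have "P t = P s + integral {s..t} \<rho>" using Pcomb[of s t] that T1 by linarith
      moreover have "P t \<le> Lp" using PLp[of t] that T1 by linarith
      ultimately show ?thesis using T1 by linarith
    qed
    have "\<exists>T3\<ge>T1. G T3 < \<delta>/3"
    proof (rule ccontr)
      assume nex: "\<not> (\<exists>T3\<ge>T1. G T3 < \<delta>/3)"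
      have big: "G r \<ge> \<delta>/3" if "r \<ge> T1" for r using nex that by (auto simp: not_less)
      define I1 where "I1 = integral {t0..T1} e"
      obtain t where t: "t \<ge> t0" "integral {t0..t} e > I1 + (G T1 + \<delta>) * 3 / \<delta>"
        using eunb by blast
      have enn: "integral {a..c} e \<ge> 0" if "t0 \<le> a" for a c
        by (rule integral_nonneg[OF intg[OF ec that]]) (use that epos in \<open>auto intro!: less_imp_le\<close>)
      have Gp: "G T1 \<ge> 0" using Gnn T1 by auto
      have tT1: "t > T1"
      proof (rule ccontr)
        assume "\<not> t > T1"
        then have "I1 = integral {t0..t} e + integral {t..T1} e"
          unfolding I1_def using Henstock_Kurzweil_Integration.integral_combine[OF t(1) _ intg[OF ec order_refl]]
          by simp
        then have "integral {t0..t} e \<le> I1" using enn[of t T1] t by simp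
        moreover have "(G T1 + \<delta>) * 3 / \<delta> \<ge> 0" using Gp \<delta> by simp
        ultimately show False using t by linarith
      qed
      have split: "integral {t0..t} e = I1 + integral {T1..t} e"
        unfolding I1_def using Henstock_Kurzweil_Integration.integral_combine[OF T1(1) _ intg[OF ec order_refl]] tT1
        by simp
      have "integral {T1..t} (\<lambda>r. \<delta>/3 * e r) \<le> integral {T1..t} (\<lambda>r. e r * G r)"
      proof (rule integral_le)
        show "(\<lambda>r. \<delta>/3 * e r) integrable_on {T1..t}"
          by (rule intg[OF _ T1(1)]) (use ec in \<open>intro continuous_intros\<close>)
        show "(\<lambda>r. e r * G r) integrable_on {T1..t}" by (rule intg[OF eGc T1(1)])
        fix r assume "r \<in> {T1..t}"
        then show "\<delta>/3 * e r \<le> e r * G r"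
          using big[of r] epos[of r] T1 by (simp add: mult.commute mult_right_mono)
      qed
      moreover have "integral {T1..t} (\<lambda>r. \<delta>/3 * e r) = \<delta>/3 * integral {T1..t} e" by simp
      moreover have "\<delta>/3 * integral {T1..t} e > G T1 + \<delta>"
      proof -
        have "integral {T1..t} e > (G T1 + \<delta>) * 3 / \<delta>" using split t by linarith
        then have "\<delta>/3 * integral {T1..t} e > \<delta>/3 * ((G T1 + \<delta>) * 3 / \<delta>)"
          using \<delta> by (intro mult_strict_left_mono) auto
        also have "\<delta>/3 * ((G T1 + \<delta>) * 3 / \<delta>) = G T1 + \<delta>" using \<delta> by simp
        finally show ?thesis .
      qed
      moreover have "G t \<le> G T1 - integral {T1..t} (\<lambda>r. e r * G r) + integral {T1..t} \<rho>"
        using ineq[of T1 t] T1 tT1 by auto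
      moreover have "integral {T1..t} \<rho> < \<delta>/3" using tail[of T1 t] tT1 by auto
      moreover have "G t \<ge> 0" using Gnn t by auto
      ultimately show False using \<delta> by linarith
    qed
    then obtain T3 where T3: "T3 \<ge> T1" "G T3 < \<delta>/3" by blast
    show "\<forall>\<^sub>F t in at_top. dist (G t) 0 < \<delta>"
    proof (rule eventually_at_top_linorderI[of T3])
      fix t assume tt: "T3 \<le> t"
      have "integral {T3..t} (\<lambda>r. e r * G r) \<ge> 0"
      proof (rule integral_nonneg)
        show "(\<lambda>r. e r * G r) integrable_on {T3..t}" by (rule intg[OF eGc]) (use T1 T3 in simp)
        fix r assume "r \<in> {T3..t}"
        then have "t0 \<le> r" using T1 T3 by simp
        then show "0 \<le> e r * G r" using epos[of r] Gnn[of r] by simp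
      qed
      moreover have "G t \<le> G T3 - integral {T3..t} (\<lambda>r. e r * G r) + integral {T3..t} \<rho>"
        using ineq[of T3 t] T1 T3 tt by auto
      moreover have "integral {T3..t} \<rho> < \<delta>/3" using tail[of T3 t] T3 tt by auto
      moreover have "G t \<ge> 0" using Gnn T1 T3 tt by auto
      ultimately show "dist (G t) 0 < \<delta>" using T3 by (simp add: dist_real_def)
    qed
  qed
qed

lemma hvd_inner_self:
  fixes w :: "real \<Rightarrow> 'c::real_inner"
  assumes "(w has_vector_derivative w') (at t within S)"
  shows "((\<lambda>r. inner (w r) (w r)) has_vector_derivative 2 * inner w' (w t)) (at t within S)"
proof -
  have "((\<lambda>r. inner (w r) (w r)) has_derivative (\<lambda>h. inner (w t) (h *\<^sub>R w') + inner (h *\<^sub>R w') (w t))) (at t within S)"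
    using assms unfolding has_vector_derivative_def by (intro has_derivative_inner) auto
  moreover have "(\<lambda>h. inner (w t) (h *\<^sub>R w') + inner (h *\<^sub>R w') (w t)) = (\<lambda>h. h *\<^sub>R (2 * inner w' (w t)))"
    by (auto simp: inner_commute algebra_simps)
  ultimately show ?thesis unfolding has_vector_derivative_def by simp
qed



lemma traj_bounded:
  fixes z z' :: "real \<Rightarrow> 'c::real_inner" and e :: "real \<Rightarrow> real"
  assumes zd: "\<And>t. t \<ge> t0 \<Longrightarrow> (z has_vector_derivative z' t) (at t within {t0..})"
    and epos: "\<And>t. t \<ge> t0 \<Longrightarrow> e t > 0"
    and key: "\<And>t. t \<ge> t0 \<Longrightarrow> inner (z' t) (z t - zs) \<le> - e t * inner (z t) (z t - zs)"
    and tt: "t \<ge> t0"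
  shows "norm (z t - zs)^2 \<le> max (norm (z t0 - zs)^2) (norm zs^2)"
proof (rule ccontr)
  define R where "R = max (norm (z t0 - zs)^2) (norm zs^2)"
  define h where "h r = inner (z r - zs) (z r - zs)" for r
  have hn: "h r = norm (z r - zs)^2" for r unfolding h_def by (simp add: power2_norm_eq_inner)
  have hd: "(h has_vector_derivative 2 * inner (z' r) (z r - zs)) (at r within {t0..})" if "r \<ge> t0" for r
    unfolding h_def by (rule hvd_inner_self) (use zd[OF that] in \<open>auto intro!: derivative_eq_intros\<close>)
  have hc: "continuous_on {t0..t} h"
    by (rule continuous_on_vector_derivative[of _ _ "\<lambda>r. 2 * inner (z' r) (z r - zs)"])
      (auto intro: has_vector_derivative_within_subset[OF hd])
  assume "\<not> norm (z t - zs)^2 \<le> max (norm (z t0 - zs)^2) (norm zs^2)"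
  then have "R < h t" unfolding R_def hn by linarith
  moreover have "h t0 \<le> R" unfolding R_def hn by simp
  ultimately obtain s where s: "t0 \<le> s" "s < t" "h s = R" "\<forall>r\<in>{s..t}. R \<le> h r"
    using barrier[OF tt hc] by blast
  have dneg: "2 * inner (z' r) (z r - zs) \<le> 0" if "r \<in> {s..t}" for r
  proof -
    have r0: "r \<ge> t0" using that s by simp
    have "R \<le> h r" using s(4) that by blast
    moreover have "norm zs ^2 \<le> R" unfolding R_def by simp
    ultimately have "norm zs ^2 \<le> norm (z r - zs)^2" using hn[of r] by linarith
    then have n1: "norm zs \<le> norm (z r - zs)" by (rule power2_le_imp_le) simp
    have "inner (z r) (z r - zs) = norm (z r - zs)^2 + inner zs (z r - zs)"
      by (simp add: power2_norm_eq_inner algebra_simps inner_diff_left inner_diff_right)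
    also have "\<dots> \<ge> norm (z r - zs)^2 - norm zs * norm (z r - zs)"
      using Cauchy_Schwarz_ineq2[of zs "z r - zs"] unfolding abs_le_iff by linarith
    finally have "inner (z r) (z r - zs) \<ge> norm (z r - zs) * (norm (z r - zs) - norm zs)"
      by (simp add: power2_eq_square algebra_simps)
    moreover have "norm (z r - zs) * (norm (z r - zs) - norm zs) \<ge> 0" using n1 by simp
    ultimately have "inner (z r) (z r - zs) \<ge> 0" by linarith
    then have "e r * inner (z r) (z r - zs) \<ge> 0" using epos[OF r0] by simp
    then show ?thesis using key[OF r0] by linarith
  qed
  have "(( \<lambda>r. 2 * inner (z' r) (z r - zs)) has_integral (h t - h s)) {s..t}"
  proof (rule fundamental_theorem_of_calculus)
    show "s \<le> t" using s by simp
    fix r assume r: "r \<in> {s..t}"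
    then have "r \<ge> t0" using s by simp
    from hd[OF this] show "(h has_vector_derivative 2 * inner (z' r) (z r - zs)) (at r within {s..t})"
      by (rule has_vector_derivative_within_subset) (use s in auto)
  qed
  then have "h t - h s \<le> 0"
    using has_integral_le[OF _ has_integral_0, of _ _ "{s..t}"] dneg by blast
  then show False using s \<open>R < h t\<close> by simp
qed



lemma sq_approx:
  fixes na ne B \<eta> :: real
  assumes "\<bar>na - ne\<bar> \<le> \<eta>" "0 \<le> ne" "ne \<le> B" "0 \<le> na" "\<eta> \<le> 1"
  shows "\<bar>na^2 - ne^2\<bar> \<le> \<eta> * (2*B+1)"
proof -
  have "na^2 - ne^2 = (na - ne) * (na + ne)" by (simp add: power2_eq_square algebra_simps)
  then have "\<bar>na^2 - ne^2\<bar> = \<bar>na - ne\<bar> * (na + ne)" using assms by (simp add: abs_mult)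
  also have "\<dots> \<le> \<eta> * (2*B+1)"
    using assms by (intro mult_mono) auto
  finally show ?thesis .
qed

lemma approx_real:
  fixes na ne \<alpha> \<epsilon> q p C B \<eta> :: real
  assumes d1: "\<bar>na - ne\<bar> \<le> \<eta>" and d2: "\<bar>q - p\<bar> \<le> \<eta>" and d3: "\<bar>\<alpha> - \<epsilon>\<bar> \<le> \<eta>"
    and "0 \<le> ne" "ne \<le> B" "\<bar>p\<bar> \<le> B" "\<bar>\<epsilon>\<bar> \<le> B" "0 \<le> \<eta>" "\<eta> \<le> 1" "0 \<le> C" "0 \<le> na"
  shows "-2*\<alpha>*na^2 + 2*C*\<bar>q\<bar>*na \<le> -2*\<epsilon>*ne^2 + 2*C*\<bar>p\<bar>*ne
           + \<eta> * (2*((B+1)^2 + B*(2*B+1)) + 2*C*(2*B+1))"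
proof -
  have B0: "0 \<le> B" using assms by linarith
  have naB: "na \<le> B + 1" using assms by linarith
  have sq: "\<bar>na^2 - ne^2\<bar> \<le> \<eta> * (2*B+1)" using sq_approx assms by blast
  have t1: "\<bar>\<alpha> - \<epsilon>\<bar> * na^2 \<le> \<eta> * (B+1)^2"
    using assms naB by (intro mult_mono power_mono) auto
  have t2: "\<bar>\<epsilon>\<bar> * \<bar>na^2 - ne^2\<bar> \<le> B * (\<eta> * (2*B+1))"
    using assms sq by (intro mult_mono) auto
  have e1: "-2*\<alpha>*na^2 + 2*\<epsilon>*ne^2 = -2*((\<alpha> - \<epsilon>)*na^2) - 2*(\<epsilon>*(na^2 - ne^2))"
    by (simp add: algebra_simps)
  have "-((\<alpha> - \<epsilon>)*na^2) \<le> \<bar>\<alpha> - \<epsilon>\<bar> * na^2"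
    by (metis abs_ge_minus_self abs_mult abs_power2 power2_abs)
  moreover have "-(\<epsilon>*(na^2 - ne^2)) \<le> \<bar>\<epsilon>\<bar> * \<bar>na^2 - ne^2\<bar>"
    by (metis abs_ge_minus_self abs_mult)
  ultimately have p1: "-2*\<alpha>*na^2 + 2*\<epsilon>*ne^2 \<le> 2*(\<eta> * (B+1)^2) + 2*(B * (\<eta> * (2*B+1)))"
    using e1 t1 t2 by linarith
  have t3: "(\<bar>q\<bar> - \<bar>p\<bar>) * na \<le> \<eta> * (B+1)"
  proof -
    have "\<bar>q\<bar> - \<bar>p\<bar> \<le> \<eta>" using d2 by linarith
    show ?thesis
    proof (cases "\<bar>q\<bar> - \<bar>p\<bar> \<ge> 0")
      case True then show ?thesis using \<open>\<bar>q\<bar> - \<bar>p\<bar> \<le> \<eta>\<close> assms naB by (intro mult_mono) auto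
    next
      case False
      then have "(\<bar>q\<bar> - \<bar>p\<bar>) * na \<le> 0" using assms by (simp add: mult_nonpos_nonneg)
      moreover have "\<eta> * (B+1) \<ge> 0" using assms B0 by simp
      ultimately show ?thesis by linarith
    qed
  qed
  have t4: "\<bar>p\<bar> * (na - ne) \<le> B * \<eta>"
  proof -
    have "\<bar>p\<bar> * (na - ne) \<le> \<bar>p\<bar> * \<bar>na - ne\<bar>" by (intro mult_left_mono) auto
    also have "\<dots> \<le> B * \<eta>" using assms d1 by (intro mult_mono) auto
    finally show ?thesis .
  qed
  have e2: "\<bar>q\<bar>*na - \<bar>p\<bar>*ne = (\<bar>q\<bar> - \<bar>p\<bar>) * na + \<bar>p\<bar> * (na - ne)" by (simp add: algebra_simps)
  have p2: "2*C*\<bar>q\<bar>*na - 2*C*\<bar>p\<bar>*ne \<le> 2*C*(\<eta> * (B+1) + B * \<eta>)"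
  proof -
    have "\<bar>q\<bar>*na - \<bar>p\<bar>*ne \<le> \<eta> * (B+1) + B * \<eta>" using e2 t3 t4 by linarith
    then have "2*C*(\<bar>q\<bar>*na - \<bar>p\<bar>*ne) \<le> 2*C*(\<eta> * (B+1) + B * \<eta>)"
      using assms by (intro mult_left_mono) auto
    then show ?thesis by (simp add: algebra_simps)
  qed
  have "2*(\<eta> * (B+1)^2) + 2*(B * (\<eta> * (2*B+1))) + 2*C*(\<eta> * (B+1) + B * \<eta>)
        = \<eta> * (2*((B+1)^2 + B*(2*B+1)) + 2*C*(2*B+1))"
    by (simp add: algebra_simps)
  then show ?thesis using p1 p2 by linarith
qed



lemma integral_ineq:
  fixes z z' :: "real \<Rightarrow> 'c::real_inner" and e e' :: "real \<Rightarrow> real"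
  assumes zd: "\<And>t. t \<ge> t0 \<Longrightarrow> (z has_vector_derivative z' t) (at t within {t0..})"
    and z'c: "continuous_on {t0..} z'"
    and ed: "\<And>t. t \<ge> t0 \<Longrightarrow> (e has_real_derivative e' t) (at t within {t0..})"
    and e'c: "continuous_on {t0..} e'"
    and key: "\<And>u r. t0 \<le> r \<Longrightarrow> r \<le> u \<Longrightarrow> inner (z' u - z' r) (z u - z r)
                \<le> - e u * norm (z u - z r)^2 + C * \<bar>e u - e r\<bar> * norm (z u - z r)"
    and C: "C \<ge> 0" and st: "t0 \<le> s" "s \<le> t"
  shows "norm (z' t)^2 - norm (z' s)^2
          \<le> integral {s..t} (\<lambda>r. -2 * e r * norm (z' r)^2 + 2 * C * \<bar>e' r\<bar> * norm (z' r))"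
proof -
  define F where "F r = -2 * e r * norm (z' r)^2 + 2 * C * \<bar>e' r\<bar> * norm (z' r)" for r
  have ed': "(e has_vector_derivative e' r) (at r within {t0..})" if "r \<ge> t0" for r
    using ed[OF that] by (simp add: has_real_derivative_iff_has_vector_derivative)
  have ec: "continuous_on {t0..} e"
    by (rule continuous_on_vector_derivative[OF ed']) simp
  define K where "K = {s..t+1}"
  have Ksub: "K \<subseteq> {t0..}" using st unfolding K_def by auto
  have cK: "compact K" unfolding K_def by simp
  obtain B1 where B1: "\<forall>r\<in>K. norm (z' r) \<le> B1"
    using compact_imp_bounded[OF compact_continuous_image[OF continuous_on_subset[OF z'c Ksub] cK]]
    unfolding bounded_iff by auto
  obtain B2 where B2: "\<forall>r\<in>K. norm (e' r) \<le> B2"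
    using compact_imp_bounded[OF compact_continuous_image[OF continuous_on_subset[OF e'c Ksub] cK]]
    unfolding bounded_iff by auto
  obtain B3 where B3: "\<forall>r\<in>K. norm (e r) \<le> B3"
    using compact_imp_bounded[OF compact_continuous_image[OF continuous_on_subset[OF ec Ksub] cK]]
    unfolding bounded_iff by auto
  define B where "B = max 0 (max B1 (max B2 B3))"
  have B0: "B \<ge> 0" unfolding B_def by simp
  have Bz: "norm (z' r) \<le> B" and Be': "\<bar>e' r\<bar> \<le> B" and Be: "\<bar>e r\<bar> \<le> B" if "r \<in> K" for r
    using B1 B2 B3 that unfolding B_def by force+
  have Fc: "continuous_on {s..t} F"
  proof -
    have "{s..t} \<subseteq> {t0..}" using st by auto
    then show ?thesis unfolding F_def
      using continuous_on_subset[OF z'c] continuous_on_subset[OF ec] continuous_on_subset[OF e'c]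
      by (intro continuous_intros) auto
  qed
  define Kc where "Kc = 2*((B+1)^2 + B*(2*B+1)) + 2*C*(2*B+1)"
  have Kc0: "Kc \<ge> 0" unfolding Kc_def using B0 C by simp
  define M where "M = Kc * (t - s) + 2*(2*B+1)"
  have M0: "M > 0"
  proof -
    have "Kc * (t - s) \<ge> 0" using Kc0 st by simp
    then show ?thesis unfolding M_def using B0 by (intro add_nonneg_pos) auto
  qed
  have main: "norm (z' t)^2 - norm (z' s)^2 \<le> integral {s..t} F + \<eta> * M"
    if \<eta>: "0 < \<eta>" "\<eta> \<le> 1" for \<eta>
  proof -
    have uc1: "uniformly_continuous_on K z'"
      by (rule compact_uniformly_continuous[OF continuous_on_subset[OF z'c Ksub] cK])
    have uc2: "uniformly_continuous_on K e'"
      by (rule compact_uniformly_continuous[OF continuous_on_subset[OF e'c Ksub] cK])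
    have uc3: "uniformly_continuous_on K e"
      by (rule compact_uniformly_continuous[OF continuous_on_subset[OF ec Ksub] cK])
    obtain d1 where d1: "d1 > 0" "\<And>x x'. x \<in> K \<Longrightarrow> x' \<in> K \<Longrightarrow> dist x' x < d1 \<Longrightarrow> dist (z' x') (z' x) < \<eta>"
      using uc1 \<eta> unfolding uniformly_continuous_on_def by metis
    obtain d2 where d2: "d2 > 0" "\<And>x x'. x \<in> K \<Longrightarrow> x' \<in> K \<Longrightarrow> dist x' x < d2 \<Longrightarrow> dist (e' x') (e' x) < \<eta>"
      using uc2 \<eta> unfolding uniformly_continuous_on_def by metis
    obtain d3 where d3: "d3 > 0" "\<And>x x'. x \<in> K \<Longrightarrow> x' \<in> K \<Longrightarrow> dist x' x < d3 \<Longrightarrow> dist (e x') (e x) < \<eta>"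
      using uc3 \<eta> unfolding uniformly_continuous_on_def by metis
    define h where "h = min 1 (min d1 (min d2 d3)) / 2"
    have h: "0 < h" "h < 1" "h < d1" "h < d2" "h < d3"
      unfolding h_def using d1 d2 d3 by auto
    have inK: "x \<in> K" if "r \<in> {s..t}" "x \<in> {r..r+h}" for r x
      using that h unfolding K_def by auto
    have A1: "norm ((1/h) *\<^sub>R (z (r+h) - z r) - z' r) \<le> \<eta>" if r: "r \<in> {s..t}" for r
    proof -
      have "norm (z (r+h) - z r - ((r+h) - r) *\<^sub>R z' r) \<le> norm ((r+h) - r) * \<eta>"
      proof (rule vector_differentiable_bound_linearization[where S="{r..r+h}" and ?x0.0=r])
        fix x assume x: "x \<in> {r..r+h}"
        then have "x \<ge> t0" using r st by auto
        from zd[OF this] show "(z has_vector_derivative z' x) (at x within {r..r+h})"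
          by (rule has_vector_derivative_within_subset) (use r st in auto)
        have "dist (z' x) (z' r) < \<eta>"
          by (rule d1(2)) (use inK[OF r x] inK[OF r, of r] h x in \<open>auto simp: dist_real_def\<close>)
        then show "norm (z' x - z' r) \<le> \<eta>" by (simp add: dist_norm)
      next
        show "closed_segment r (r + h) \<subseteq> {r..r + h}" using h by (simp add: closed_segment_eq_real_ivl)
        show "r \<in> {r..r+h}" using h by simp
      qed
      then have "norm (z (r+h) - z r - h *\<^sub>R z' r) \<le> h * \<eta>" using h by simp
      have "(1/h) *\<^sub>R (z (r+h) - z r) - z' r = (1/h) *\<^sub>R (z (r+h) - z r - h *\<^sub>R z' r)"
        using h by (simp add: algebra_simps)
      then have "norm ((1/h) *\<^sub>R (z (r+h) - z r) - z' r) = norm (z (r+h) - z r - h *\<^sub>R z' r) / h"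
        using h by simp
      also have "\<dots> \<le> (h * \<eta>) / h" using \<open>norm (z (r+h) - z r - h *\<^sub>R z' r) \<le> h * \<eta>\<close> h
        by (intro divide_right_mono) auto
      also have "\<dots> = \<eta>" using h by simp
      finally show ?thesis .
    qed
    have A2: "\<bar>(e (r+h) - e r) / h - e' r\<bar> \<le> \<eta>" if r: "r \<in> {s..t}" for r
    proof -
      have "norm (e (r+h) - e r - ((r+h) - r) *\<^sub>R e' r) \<le> norm ((r+h) - r) * \<eta>"
      proof (rule vector_differentiable_bound_linearization[where S="{r..r+h}" and ?x0.0=r])
        fix x assume x: "x \<in> {r..r+h}"
        then have "x \<ge> t0" using r st by auto
        from ed'[OF this] show "(e has_vector_derivative e' x) (at x within {r..r+h})"
          by (rule has_vector_derivative_within_subset) (use r st in auto)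
        have "dist (e' x) (e' r) < \<eta>"
          by (rule d2(2)) (use inK[OF r x] inK[OF r, of r] h x in \<open>auto simp: dist_real_def\<close>)
        then show "norm (e' x - e' r) \<le> \<eta>" by (simp add: dist_norm)
      next
        show "closed_segment r (r + h) \<subseteq> {r..r + h}" using h by (simp add: closed_segment_eq_real_ivl)
        show "r \<in> {r..r+h}" using h by simp
      qed
      then have "\<bar>e (r+h) - e r - h * e' r\<bar> \<le> h * \<eta>" using h by simp
      moreover have "(e (r+h) - e r) / h - e' r = (e (r+h) - e r - h * e' r) / h"
        using h by (simp add: field_simps)
      ultimately show ?thesis using h by (simp add: field_simps abs_div)
    qed
    have A3: "\<bar>e (r+h) - e r\<bar> \<le> \<eta>" if r: "r \<in> {s..t}" for r
    proof -
      have "dist (e (r+h)) (e r) < \<eta>"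
        by (rule d3(2)) (use inK[OF r, of "r+h"] inK[OF r, of r] h in \<open>auto simp: dist_real_def\<close>)
      then show ?thesis by (simp add: dist_real_def)
    qed
    define w where "w r = z (r+h) - z r" for r
    define D where "D r = 2 * inner (z' (r+h) - z' r) (w r)" for r
    have wd: "(w has_vector_derivative (z' (r+h) - z' r)) (at r within {s..t})" if r: "r \<in> {s..t}" for r
    proof -
      have "((\<lambda>r. r + h) has_vector_derivative 1) (at r within {s..t})"
        by (auto intro!: derivative_eq_intros)
      moreover have "(z has_vector_derivative z' (r+h)) (at ((\<lambda>r. r + h) r) within (\<lambda>r. r + h) ` {s..t})"
        using zd[of "r+h"] r st h
        by (intro has_vector_derivative_within_subset[OF zd[of "r+h"]]) auto
      ultimately have "((z \<circ> (\<lambda>r. r + h)) has_vector_derivative (1 *\<^sub>R z' (r+h))) (at r within {s..t})"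
        by (rule vector_diff_chain_within)
      then have "((\<lambda>r. z (r + h)) has_vector_derivative z' (r+h)) (at r within {s..t})"
        by (simp add: o_def)
      moreover have "(z has_vector_derivative z' r) (at r within {s..t})"
        using r st by (intro has_vector_derivative_within_subset[OF zd[of r]]) auto
      ultimately show ?thesis unfolding w_def by (rule has_vector_derivative_diff)
    qed
    have "(D has_integral (inner (w t) (w t) - inner (w s) (w s))) {s..t}"
      unfolding D_def
      by (rule fundamental_theorem_of_calculus) (use st wd in \<open>auto intro!: hvd_inner_self\<close>)
    then have Dh: "((\<lambda>r. D r * (1/h^2)) has_integral ((inner (w t) (w t) - inner (w s) (w s)) * (1/h^2))) {s..t}"
      by (rule has_integral_mult_left)
    have nw: "norm ((1/h) *\<^sub>R w r) = norm (w r) / h" for r using h by simp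
    have pw: "D r * (1/h^2) \<le> F r + \<eta> * Kc" if r: "r \<in> {s..t}" for r
    proof -
      have rK: "r \<in> K" using inK[OF r, of r] h by simp
      have r0: "t0 \<le> r" using r st by simp
      have k: "inner (z' (r+h) - z' r) (w r) \<le> - e (r+h) * norm (w r)^2 + C * \<bar>e (r+h) - e r\<bar> * norm (w r)"
        unfolding w_def using key[OF r0, of "r+h"] h by simp
      have "D r * (1/h^2) \<le> 2 * (- e (r+h) * norm (w r)^2 + C * \<bar>e (r+h) - e r\<bar> * norm (w r)) * (1/h^2)"
        unfolding D_def using k h by (intro mult_right_mono) auto
      also have "\<dots> = -2 * e (r+h) * (norm (w r) / h)^2 + 2 * C * \<bar>(e (r+h) - e r) / h\<bar> * (norm (w r) / h)"
        using h by (simp add: field_simps power2_eq_square abs_div)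
      also have "\<dots> \<le> -2 * e r * norm (z' r)^2 + 2 * C * \<bar>e' r\<bar> * norm (z' r) + \<eta> * Kc"
        unfolding Kc_def
      proof (rule approx_real)
        have "\<bar>norm ((1/h) *\<^sub>R w r) - norm (z' r)\<bar> \<le> norm ((1/h) *\<^sub>R w r - z' r)"
          by (rule norm_triangle_ineq3)
        then show "\<bar>norm (w r) / h - norm (z' r)\<bar> \<le> \<eta>" using A1[OF r] nw[of r] unfolding w_def by linarith
        show "\<bar>(e (r+h) - e r) / h - e' r\<bar> \<le> \<eta>" by (rule A2[OF r])
        show "\<bar>e (r+h) - e r\<bar> \<le> \<eta>" by (rule A3[OF r])
        show "norm (z' r) \<le> B" "\<bar>e' r\<bar> \<le> B" "\<bar>e r\<bar> \<le> B" using Bz Be' Be rK by auto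
      qed (use \<eta> C h in auto)
      finally show ?thesis unfolding F_def by simp
    qed
    have Fi: "(\<lambda>r. F r + \<eta> * Kc) integrable_on {s..t}"
      by (rule integrable_continuous_interval) (use Fc in \<open>intro continuous_intros\<close>)
    have "(inner (w t) (w t) - inner (w s) (w s)) * (1/h^2) \<le> integral {s..t} (\<lambda>r. F r + \<eta> * Kc)"
      by (rule has_integral_le[OF Dh integrable_integral[OF Fi]]) (use pw in auto)
    also have "integral {s..t} (\<lambda>r. F r + \<eta> * Kc) = integral {s..t} F + integral {s..t} (\<lambda>r. \<eta> * Kc)"
      by (rule integral_add[OF integrable_continuous_interval[OF Fc] integrable_const_ivl])
    also have "integral {s..t} (\<lambda>r. \<eta> * Kc) = \<eta> * Kc * (t - s)"
      using st by simp
    finally have I: "(norm (w t) / h)^2 - (norm (w s) / h)^2 \<le> integral {s..t} F + \<eta> * Kc * (t - s)"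
      using h by (simp add: power2_norm_eq_inner[symmetric] field_simps power2_eq_square)
    have E: "\<bar>(norm (w r) / h)^2 - norm (z' r)^2\<bar> \<le> \<eta> * (2*B+1)" if r: "r \<in> {s..t}" for r
    proof (rule sq_approx)
      have "\<bar>norm ((1/h) *\<^sub>R w r) - norm (z' r)\<bar> \<le> norm ((1/h) *\<^sub>R w r - z' r)"
        by (rule norm_triangle_ineq3)
      then show "\<bar>norm (w r) / h - norm (z' r)\<bar> \<le> \<eta>" using A1[OF r] nw[of r] unfolding w_def by linarith
      show "norm (z' r) \<le> B" using Bz inK[OF r, of r] h by simp
    qed (use \<eta> h in auto)
    have "norm (z' t)^2 - norm (z' s)^2 \<le> integral {s..t} F + \<eta> * Kc * (t - s) + 2 * (\<eta> * (2*B+1))"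
      using I E[of t] E[of s] st by (auto simp: abs_le_iff)
    then show ?thesis unfolding M_def by (simp add: algebra_simps)
  qed
  have "norm (z' t)^2 - norm (z' s)^2 \<le> integral {s..t} F"
  proof (rule field_le_epsilon)
    fix \<epsilon> :: real assume \<epsilon>: "0 < \<epsilon>"
    define \<eta> where "\<eta> = min 1 (\<epsilon> / M)"
    have \<eta>: "0 < \<eta>" "\<eta> \<le> 1" unfolding \<eta>_def using \<epsilon> M0 by auto
    have "\<eta> * M \<le> (\<epsilon> / M) * M" unfolding \<eta>_def using M0 by (intro mult_right_mono) auto
    then have "\<eta> * M \<le> \<epsilon>" using M0 by simp
    then show "norm (z' t)^2 - norm (z' s)^2 \<le> integral {s..t} F + \<epsilon>" using main[OF \<eta>] by linarith
  qed
  then show ?thesis unfolding F_def .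
qed



lemma grad_ineq:
  fixes f :: "'a::real_inner \<Rightarrow> real"
  assumes cvx: "convex_on UNIV f" and d: "(f has_derivative (\<lambda>h. inner g h)) (at z)"
  shows "f y \<ge> f z + inner g (y - z)"
proof -
  define \<phi> where "\<phi> s = f (z + s *\<^sub>R (y - z))" for s :: real
  have cphi: "convex_on UNIV \<phi>"
  proof (rule convex_onI)
    fix t a c :: real assume t: "0 < t" "t < 1"
    have "z + ((1 - t) * a + t * c) *\<^sub>R (y - z) = (1 - t) *\<^sub>R (z + a *\<^sub>R (y - z)) + t *\<^sub>R (z + c *\<^sub>R (y - z))"
      by (simp add: algebra_simps)
    then show "\<phi> ((1 - t) *\<^sub>R a + t *\<^sub>R c) \<le> (1 - t) * \<phi> a + t * \<phi> c"
      unfolding \<phi>_def using convex_onD[OF cvx, of t] t by simp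
  qed simp
  have "((\<lambda>s. z + s *\<^sub>R (y - z)) has_derivative (\<lambda>s. s *\<^sub>R (y - z))) (at 0)"
    by (auto intro!: derivative_eq_intros)
  moreover have "(f has_derivative (\<lambda>h. inner g h)) (at ((\<lambda>s. z + s *\<^sub>R (y - z)) 0))" using d by simp
  ultimately have "((\<lambda>s. f (z + s *\<^sub>R (y - z))) has_derivative (\<lambda>s. inner g (s *\<^sub>R (y - z)))) (at 0)"
    using has_derivative_compose[of "\<lambda>s. z + s *\<^sub>R (y - z)"] by blast
  then have "(\<phi> has_derivative (\<lambda>s. inner g (y - z) * s)) (at 0)"
    unfolding \<phi>_def by (simp add: mult.commute)
  then have "(\<phi> has_field_derivative inner g (y - z)) (at 0)"
    unfolding has_field_derivative_def by simp
  then have "\<phi> 1 - \<phi> 0 \<ge> inner g (y - z) * (1 - 0)"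
    by (intro convex_on_imp_above_tangent[OF cphi]) auto
  then show ?thesis unfolding \<phi>_def by simp
qed

lemma inner_ext_eq:
  fixes a c :: "'a::real_inner"
  assumes "\<And>w. inner w a = inner w c"
  shows "a = c"
proof -
  have "inner (a - c) (a - c) = 0" using assms[of "a - c"] by (simp add: inner_diff_right)
  then show ?thesis by simp
qed

lemma adj_diff:
  fixes A :: "'a::real_inner \<Rightarrow> 'b::real_inner"
  assumes A: "bounded_linear A" and adj: "\<And>u v. inner (A u) v = inner u (As v)"
  shows "As (p - q) = As p - As q"
proof (rule inner_ext_eq)
  fix w
  show "inner w (As (p - q)) = inner w (As p - As q)"
    by (simp add: adj[symmetric] inner_diff_right)
qed

lemma adj_bound:
  fixes A :: "'a::real_inner \<Rightarrow> 'b::real_inner"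
  assumes A: "\<And>u. norm (A u) \<le> norm u * KA" and KA: "KA \<ge> 0" and adj: "\<And>u v. inner (A u) v = inner u (As v)"
  shows "norm (As v) \<le> KA * norm v"
proof (cases "As v = 0")
  case True then show ?thesis using KA by simp
next
  case False
  have "norm (As v)^2 = inner (A (As v)) v" by (simp add: adj power2_norm_eq_inner)
  also have "\<dots> \<le> norm (A (As v)) * norm v" by (rule norm_cauchy_schwarz)
  also have "\<dots> \<le> (norm (As v) * KA) * norm v" by (intro mult_right_mono A) simp
  finally have "norm (As v) * norm (As v) \<le> norm (As v) * (KA * norm v)"
    by (simp add: power2_eq_square algebra_simps)
  then show ?thesis using False by simp
qed

lemma key_abstract:
  fixes T :: "'c::real_inner \<Rightarrow> 'c"
  assumes mono: "inner (T zu - T zr) (zu - zr) \<ge> 0"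
    and du: "zu' = - (T zu + eu *\<^sub>R zu)" and dr: "zr' = - (T zr + er *\<^sub>R zr)"
    and C: "norm zr \<le> C"
  shows "inner (zu' - zr') (zu - zr) \<le> - eu * norm (zu - zr)^2 + C * \<bar>eu - er\<bar> * norm (zu - zr)"
proof -
  define d where "d = zu - zr"
  have "zu' - zr' = - (T zu - T zr) - (eu *\<^sub>R d + (eu - er) *\<^sub>R zr)"
    unfolding du dr d_def by (simp add: algebra_simps)
  then have "inner (zu' - zr') d = - inner (T zu - T zr) d - eu * norm d ^2 - (eu - er) * inner zr d"
    by (simp add: inner_diff_left inner_add_left power2_norm_eq_inner)
  moreover have "- ((eu - er) * inner zr d) \<le> \<bar>eu - er\<bar> * (norm zr * norm d)"
  proof -
    have "- ((eu - er) * inner zr d) \<le> \<bar>(eu - er) * inner zr d\<bar>" by simp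
    also have "\<dots> = \<bar>eu - er\<bar> * \<bar>inner zr d\<bar>" by (simp add: abs_mult)
    also have "\<dots> \<le> \<bar>eu - er\<bar> * (norm zr * norm d)"
      by (intro mult_left_mono Cauchy_Schwarz_ineq2) simp
    finally show ?thesis .
  qed
  moreover have "\<bar>eu - er\<bar> * (norm zr * norm d) \<le> \<bar>eu - er\<bar> * (C * norm d)"
    using C by (intro mult_left_mono mult_right_mono) auto
  ultimately show ?thesis using mono unfolding d_def by (simp add: algebra_simps)
qed

lemma key2:
  fixes T :: "'c::real_inner \<Rightarrow> 'c"
  assumes mono: "inner (T zt - T zs) (zt - zs) \<ge> 0" and Tzs: "T zs = 0"
    and dt: "zt' = - (T zt + e *\<^sub>R zt)"
  shows "inner zt' (zt - zs) \<le> - e * inner zt (zt - zs)"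
proof -
  have "inner zt' (zt - zs) = - inner (T zt - T zs) (zt - zs) - e * inner zt (zt - zs)"
    unfolding dt Tzs by (simp add: inner_diff_left inner_add_left)
  then show ?thesis using mono by simp
qed

lemma nonint_unbounded:
  fixes e :: "real \<Rightarrow> real"
  assumes ec: "continuous_on {t0..} e" and epos: "\<And>t. t \<ge> t0 \<Longrightarrow> e t \<ge> 0"
    and ni: "\<not> set_integrable lborel {t0..} e"
  shows "\<exists>t\<ge>t0. integral {t0..t} e > B"
proof (rule ccontr)
  assume "\<not> ?thesis"
  then have bd: "integral {t0..t} e \<le> B" if "t \<ge> t0" for t using that by (auto simp: not_less)
  define A where "A i = {t0..t0 + real i}" for i :: nat
  have si: "set_integrable lborel (A i) e" for i
    unfolding A_def by (rule borel_integrable_atLeastAtMost'[OF continuous_on_subset[OF ec]]) auto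
  have LI: "(LINT x:A i|lborel. e x) = integral (A i) e" for i
    by (rule set_borel_integral_eq_integral(2)[OF si])
  have inc: "incseq (\<lambda>i. integral (A i) e)"
  proof (rule incseq_SucI)
    fix i
    show "integral (A i) e \<le> integral (A (Suc i)) e"
      unfolding A_def
      by (rule integral_subset_le)
        (use continuous_on_subset[OF ec] epos in \<open>auto intro!: integrable_continuous_interval\<close>)
  qed
  have "\<forall>i. integral (A i) e \<le> B" using bd unfolding A_def by simp
  then obtain L where L: "(\<lambda>i. integral (A i) e) \<longlonglongrightarrow> L"
    using incseq_convergent[OF inc, of B] by blast
  have "set_integrable lborel (\<Union>i. A i) e"
  proof (rule pos_integrable_to_top[where l = L])
    show "mono A" unfolding A_def mono_def by auto
    show "(\<lambda>i. LINT x:A i|lborel. e x) \<longlonglongrightarrow> L" using L LI by simp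
  qed (use si epos in \<open>auto simp: A_def\<close>)
  moreover have "(\<Union>i. A i) = {t0..}"
  proof (auto simp: A_def)
    fix x assume "t0 \<le> x"
    obtain n :: nat where "x - t0 \<le> real n" using real_arch_simple by blast
    then show "\<exists>i. x \<le> t0 + real i" by (intro exI[of _ n]) simp
  qed
  ultimately show False using ni by simp
qed



theorem theorem3p4:
  fixes f :: "'a::{real_inner, complete_space} \<Rightarrow> real"
    and gf :: "'a \<Rightarrow> 'a"
    and A :: "'a \<Rightarrow> 'b::{real_inner, complete_space}"
    and As :: "'b \<Rightarrow> 'a"
    and b :: 'b
    and eps eps' :: "real \<Rightarrow> real"
    and t0 :: real
    and x x' :: "real \<Rightarrow> 'a"
    and lam lam' :: "real \<Rightarrow> 'b"
  assumes f_convex: "convex_on UNIV f"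
    and f_grad: "\<And>z. (f has_derivative (\<lambda>h. inner (gf z) h)) (at z)"
    and gf_cont: "continuous_on UNIV gf"
    and gf_lip: "\<And>B. bounded B \<Longrightarrow> \<exists>K. K-lipschitz_on B gf"
    and A_lin: "bounded_linear A"
    and As_adj: "\<And>u v. inner (A u) v = inner u (As v)"
    and t0_nonneg: "t0 \<ge> 0"
    and eps_pos: "\<And>t. t \<ge> t0 \<Longrightarrow> eps t > 0"
    and eps_deriv: "\<And>t. t \<ge> t0 \<Longrightarrow> (eps has_real_derivative eps' t) (at t within {t0..})"
    and eps'_cont: "continuous_on {t0..} eps'"
    and eps_lim: "(eps \<longlongrightarrow> 0) at_top"
    and SM_ne: "opt_sol f A b \<times> lag_mult f gf A As b \<noteq> {}"
    and x_deriv: "\<And>t. t \<ge> t0 \<Longrightarrow> (x has_vector_derivative x' t) (at t within {t0..})"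
    and lam_deriv: "\<And>t. t \<ge> t0 \<Longrightarrow> (lam has_vector_derivative lam' t) (at t within {t0..})"
    and x'_cont: "continuous_on {t0..} x'"
    and lam'_cont: "continuous_on {t0..} lam'"
    and eq1: "\<And>t. t \<ge> t0 \<Longrightarrow> x' t + gf (x t) + As (lam t) + eps t *\<^sub>R x t = 0"
    and eq2: "\<And>t. t \<ge> t0 \<Longrightarrow> lam' t + b - A (x t) + eps t *\<^sub>R lam t = 0"
    and eps_not_L1: "\<not> set_integrable lborel {t0..} eps"
    and eps'_cond: "set_integrable lborel {t0..} eps'
                    \<or> set_integrable lborel {t0..} (\<lambda>t. \<bar>eps' t\<bar>^2 / eps t)"
  shows "\<forall>(xb, lb) \<in> opt_sol f A b \<times> lag_mult f gf A As b.
           ((\<lambda>t. lagr f A b (x t) lb - lagr f A b xb (lam t)) \<longlongrightarrow> 0) at_top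
         \<and> ((\<lambda>t. norm (x' t, lam' t)) \<longlongrightarrow> 0) at_top"
proof -
  obtain xb lb where xb: "xb \<in> opt_sol f A b" and lb: "lb \<in> lag_mult f gf A As b"
    using SM_ne by auto
  have Axb: "A xb = b" using xb unfolding opt_sol_def by simp
  have glb: "gf xb + As lb = 0" using lb xb unfolding lag_mult_def by simp
  have Alin: "A (u - v) = A u - A v" for u v
    by (rule linear_diff[OF bounded_linear.linear[OF A_lin]])
  have Asd: "As (p - q) = As p - As q" for p q by (rule adj_diff[OF A_lin As_adj])
  have gmono: "inner (gf u - gf v) (u - v) \<ge> 0" for u v
  proof -
    have "f v \<ge> f u + inner (gf u) (v - u)" by (rule grad_ineq[OF f_convex f_grad])
    moreover have "f u \<ge> f v + inner (gf v) (u - v)" by (rule grad_ineq[OF f_convex f_grad])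
    moreover have "inner (gf u - gf v) (u - v) = - (inner (gf u) (v - u) + inner (gf v) (u - v))"
      by (simp add: inner_diff_left inner_diff_right)
    ultimately show ?thesis by linarith
  qed
  define T where "T p = (gf (fst p) + As (snd p), b - A (fst p))" for p :: "'a \<times> 'b"
  define z where "z t = (x t, lam t)" for t
  define z' where "z' t = (x' t, lam' t)" for t
  define zs where "zs = (xb, lb)"
  have Tmono: "inner (T p - T q) (p - q) \<ge> 0" for p q
  proof -
    obtain p1 p2 where p: "p = (p1, p2)" by (cases p)
    obtain q1 q2 where q: "q = (q1, q2)" by (cases q)
    have c: "inner (As p2 - As q2) (p1 - q1) = inner (A p1 - A q1) (p2 - q2)"
      by (simp only: Asd[symmetric] Alin[symmetric]) (metis As_adj inner_commute)
    have "T p - T q = (gf p1 - gf q1 + (As p2 - As q2), - (A p1 - A q1))"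
      unfolding T_def p q by (simp add: algebra_simps)
    then have "inner (T p - T q) (p - q)
        = inner (gf p1 - gf q1) (p1 - q1) + inner (As p2 - As q2) (p1 - q1) - inner (A p1 - A q1) (p2 - q2)"
      unfolding p q by (simp add: inner_add_left inner_diff_left)
    then show ?thesis using c gmono[of p1 q1] by simp
  qed
  have Tzs: "T zs = 0" using Axb glb by (simp add: T_def zs_def zero_prod_def)
  have zd: "(z has_vector_derivative z' t) (at t within {t0..})" if "t \<ge> t0" for t
    unfolding z_def z'_def by (rule has_vector_derivative_Pair[OF x_deriv[OF that] lam_deriv[OF that]])
  have z'c: "continuous_on {t0..} z'"
    unfolding z'_def by (intro continuous_on_Pair x'_cont lam'_cont)
  have zeq: "z' t = - (T (z t) + eps t *\<^sub>R z t)" if t: "t \<ge> t0" for t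
  proof -
    have 1: "x' t = - (gf (x t) + As (lam t) + eps t *\<^sub>R x t)"
      using eq1[OF t] by (simp only: eq_neg_iff_add_eq_0 add.assoc)
    have "lam' t + (b - A (x t) + eps t *\<^sub>R lam t) = lam' t + b - A (x t) + eps t *\<^sub>R lam t"
      by (simp add: algebra_simps)
    then have 2: "lam' t = - (b - A (x t) + eps t *\<^sub>R lam t)"
      using eq2[OF t] by (simp only: eq_neg_iff_add_eq_0)
    show ?thesis unfolding z'_def z_def T_def using 1 2 by simp
  qed
  define R0 where "R0 = max (norm (z t0 - zs)^2) (norm zs^2)"
  have tb: "norm (z t - zs)^2 \<le> R0" if "t \<ge> t0" for t
    unfolding R0_def
  proof (rule traj_bounded[OF zd eps_pos _ that])
    fix r assume r: "r \<ge> t0"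
    show "inner (z' r) (z r - zs) \<le> - eps r * inner (z r) (z r - zs)"
      by (rule key2[OF Tmono Tzs zeq[OF r]])
  qed
  define Cz where "Cz = norm zs + sqrt R0"
  have Cz0: "Cz \<ge> 0" unfolding Cz_def
    by (intro add_nonneg_nonneg norm_ge_zero real_sqrt_ge_zero) (auto simp: R0_def le_max_iff_disj)
  have zb: "norm (z t) \<le> Cz" if "t \<ge> t0" for t
  proof -
    have "norm (z t - zs) \<le> sqrt R0" by (rule real_le_rsqrt[OF tb[OF that]])
    moreover have "norm (z t) \<le> norm (z t - zs) + norm zs" using norm_triangle_sub[of "z t" zs] by linarith
    ultimately show ?thesis unfolding Cz_def by linarith
  qed
  have xb': "norm (x t) \<le> Cz" and lb': "norm (lam t) \<le> Cz" if "t \<ge> t0" for t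
    using zb[OF that] norm_fst_le[of "x t" "lam t"] norm_snd_le[of "lam t" "x t"] unfolding z_def by linarith+
  have keyI: "inner (z' u - z' r) (z u - z r)
                \<le> - eps u * norm (z u - z r)^2 + Cz * \<bar>eps u - eps r\<bar> * norm (z u - z r)"
    if "t0 \<le> r" "r \<le> u" for u r
  proof -
    have u: "t0 \<le> u" using that by simp
    show ?thesis by (rule key_abstract[OF Tmono[of "z u" "z r"] zeq[OF u] zeq[OF that(1)] zb[OF that(1)]])
  qed
  have II: "norm (z' t)^2 - norm (z' s)^2
          \<le> integral {s..t} (\<lambda>r. -2 * eps r * norm (z' r)^2 + 2 * Cz * \<bar>eps' r\<bar> * norm (z' r))"
    if "t0 \<le> s" "s \<le> t" for s t
    by (rule integral_ineq[OF zd z'c eps_deriv eps'_cont keyI Cz0 that])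
  have ec: "continuous_on {t0..} eps"
    by (rule continuous_on_vector_derivative[of _ _ eps'])
      (use eps_deriv in \<open>auto simp: has_real_derivative_iff_has_vector_derivative\<close>)
  obtain KA where KA: "KA > 0" "\<And>u. norm (A u) \<le> norm u * KA"
    using bounded_linear.pos_bounded[OF A_lin] by blast
  have Asb: "norm (As v) \<le> KA * norm v" for v
    by (rule adj_bound[OF KA(2) _ As_adj]) (use KA in simp)
  obtain Kg where Kg: "Kg-lipschitz_on (cball 0 Cz) gf" using gf_lip[OF bounded_cball] by blast
  have Kg0: "Kg \<ge> 0" using Kg unfolding lipschitz_on_def by simp
  have gfb: "norm (gf u) \<le> norm (gf 0) + Kg * Cz" if "norm u \<le> Cz" for u
  proof -
    have "u \<in> cball 0 Cz" "(0::'a) \<in> cball 0 Cz" using that Cz0 by (auto simp: dist_norm)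
    then have "dist (gf u) (gf 0) \<le> Kg * dist u 0"
      using Kg unfolding lipschitz_on_def by blast
    moreover have "Kg * dist u 0 \<le> Kg * Cz" using that Kg0 by (intro mult_left_mono) auto
    moreover have "norm (gf u) \<le> norm (gf 0) + dist (gf u) (gf 0)"
      by (metis dist_norm norm_triangle_sub add.commute)
    ultimately show ?thesis by linarith
  qed
  obtain T1 where T1: "\<And>t. t \<ge> T1 \<Longrightarrow> eps t < 1"
    using order_tendstoD(2)[OF eps_lim, of 1] unfolding eventually_at_top_linorder by auto
  obtain Eb1 where Eb1: "\<forall>r\<in>{t0..max t0 T1}. norm (eps r) \<le> Eb1"
    using compact_imp_bounded[OF compact_continuous_image[OF continuous_on_subset[OF ec] compact_Icc, of t0 "max t0 T1"]]
    unfolding bounded_iff by auto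
  define Eb where "Eb = max 1 Eb1"
  have epsb: "eps t \<le> Eb" if "t \<ge> t0" for t
  proof (cases "t \<le> max t0 T1")
    case True then show ?thesis using Eb1 that unfolding Eb_def by force
  next
    case False
    then have "T1 \<le> t" by simp
    then have "eps t < 1" by (rule T1)
    then show ?thesis unfolding Eb_def by simp
  qed
  define N where "N = (norm (gf 0) + Kg * Cz) + KA * Cz + norm b + Cz * KA + Eb * Cz"
  have z'b: "norm (z' t) \<le> N" if t: "t \<ge> t0" for t
  proof -
    have "norm (z' t) = norm (T (z t) + eps t *\<^sub>R z t)" unfolding zeq[OF t] by (rule norm_minus_cancel)
    also have "\<dots> \<le> norm (T (z t)) + norm (eps t *\<^sub>R z t)" by (rule norm_triangle_ineq)
    also have "norm (eps t *\<^sub>R z t) \<le> Eb * Cz"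
      using epsb[OF t] eps_pos[OF t] zb[OF t] by (simp add: mult_mono)
    also have "norm (T (z t)) \<le> norm (gf (x t) + As (lam t)) + norm (b - A (x t))"
      unfolding T_def z_def by (simp add: norm_Pair_le)
    also have "norm (gf (x t) + As (lam t)) \<le> norm (gf (x t)) + norm (As (lam t))" by (rule norm_triangle_ineq)
    also have "norm (b - A (x t)) \<le> norm b + norm (A (x t))" by (rule norm_triangle_ineq4)
    also have "norm (gf (x t)) \<le> norm (gf 0) + Kg * Cz" by (rule gfb[OF xb'[OF t]])
    also have "norm (As (lam t)) \<le> KA * Cz"
      using Asb[of "lam t"] lb'[OF t] KA by (meson mult_left_mono order_trans less_imp_le)
    also have "norm (A (x t)) \<le> Cz * KA"
      using KA(2)[of "x t"] xb'[OF t] KA by (meson mult_right_mono order_trans less_imp_le)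
    finally show ?thesis unfolding N_def by simp
  qed
  define G where "G t = norm (z' t)^2" for t
  define F where "F r = -2 * eps r * norm (z' r)^2 + 2 * Cz * \<bar>eps' r\<bar> * norm (z' r)" for r
  have Gc: "continuous_on {t0..} G" unfolding G_def by (intro continuous_intros z'c)
  have eunb: "\<exists>t\<ge>t0. integral {t0..t} eps > B" for B
    by (rule nonint_unbounded[OF ec _ eps_not_L1]) (use eps_pos in \<open>auto intro: less_imp_le\<close>)
  have conv: "(G \<longlongrightarrow> 0) at_top"
    if \<rho>c: "continuous_on {t0..} \<rho>" and \<rho>nn: "\<And>r. r \<ge> t0 \<Longrightarrow> \<rho> r \<ge> 0"
      and \<rho>i: "set_integrable lborel {t0..} \<rho>"
      and \<rho>F: "\<And>r. r \<ge> t0 \<Longrightarrow> F r \<le> \<rho> r - eps r * G r" for \<rho>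
  proof (rule decay[OF _ eps_pos Gc ec \<rho>c \<rho>nn _ eunb])
    show "G t \<ge> 0" for t unfolding G_def by simp
    have \<rho>I: "\<rho> integrable_on {t0..}" by (rule set_borel_integral_eq_integral(1)[OF \<rho>i])
    show "integral {t0..t} \<rho> \<le> integral {t0..} \<rho>" if "t \<ge> t0" for t
      by (rule integral_subset_le[OF _ _ \<rho>I])
        (use \<rho>nn that in \<open>auto intro!: integrable_continuous_interval continuous_on_subset[OF \<rho>c]\<close>)
    fix s t assume st: "t0 \<le> s" "s \<le> t"
    have sub: "{s..t} \<subseteq> {t0..}" using st by auto
    have c1: "continuous_on {s..t} \<rho>" by (rule continuous_on_subset[OF \<rho>c sub])
    have c2: "continuous_on {s..t} (\<lambda>r. eps r * G r)"
      by (rule continuous_on_subset[OF _ sub]) (use ec Gc in \<open>intro continuous_intros\<close>)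
    have c3: "continuous_on {s..t} F" unfolding F_def
      by (rule continuous_on_subset[OF _ sub]) (use ec z'c eps'_cont in \<open>intro continuous_intros\<close>)
    have "G t - G s \<le> integral {s..t} F" using II[OF st] unfolding G_def F_def .
    also have "\<dots> \<le> integral {s..t} (\<lambda>r. \<rho> r - eps r * G r)"
      by (rule integral_le) (use c1 c2 c3 \<rho>F st in \<open>auto intro!: integrable_continuous_interval continuous_intros\<close>)
    also have "\<dots> = integral {s..t} \<rho> - integral {s..t} (\<lambda>r. eps r * G r)"
      by (rule integral_diff) (use c1 c2 in \<open>auto intro!: integrable_continuous_interval\<close>)
    finally show "G t \<le> G s - integral {s..t} (\<lambda>r. eps r * G r) + integral {s..t} \<rho>" by simp
  qed
  have Glim: "(G \<longlongrightarrow> 0) at_top"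
    using eps'_cond
  proof
    assume i: "set_integrable lborel {t0..} eps'"
    show ?thesis
    proof (rule conv[of "\<lambda>r. 2 * Cz * N * \<bar>eps' r\<bar>"])
      show "continuous_on {t0..} (\<lambda>r. 2 * Cz * N * \<bar>eps' r\<bar>)" by (intro continuous_intros eps'_cont)
      have N0: "N \<ge> 0" using z'b[of t0] norm_ge_zero[of "z' t0"] by linarith
      show "2 * Cz * N * \<bar>eps' r\<bar> \<ge> 0" for r using Cz0 N0 by simp
      show "set_integrable lborel {t0..} (\<lambda>r. 2 * Cz * N * \<bar>eps' r\<bar>)"
        by (rule set_integrable_mult_right[OF set_integrable_abs[OF i]])
      fix r assume r: "r \<ge> t0"
      have "2 * Cz * \<bar>eps' r\<bar> * norm (z' r) \<le> 2 * Cz * \<bar>eps' r\<bar> * N"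
        using z'b[OF r] Cz0 by (intro mult_left_mono) auto
      moreover have "eps r * G r \<ge> 0" using eps_pos[OF r] unfolding G_def by simp
      ultimately show "F r \<le> 2 * Cz * N * \<bar>eps' r\<bar> - eps r * G r"
        unfolding F_def G_def by (simp add: algebra_simps)
    qed
  next
    assume i: "set_integrable lborel {t0..} (\<lambda>t. \<bar>eps' t\<bar>^2 / eps t)"
    show ?thesis
    proof (rule conv[of "\<lambda>r. Cz^2 * (\<bar>eps' r\<bar>^2 / eps r)"])
      show "continuous_on {t0..} (\<lambda>r. Cz^2 * (\<bar>eps' r\<bar>^2 / eps r))"
        by (intro continuous_intros eps'_cont ec) (use eps_pos in force)
      show "Cz^2 * (\<bar>eps' r\<bar>^2 / eps r) \<ge> 0" if "r \<ge> t0" for r using eps_pos[OF that] by simp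
      show "set_integrable lborel {t0..} (\<lambda>r. Cz^2 * (\<bar>eps' r\<bar>^2 / eps r))"
        by (rule set_integrable_mult_right[OF i])
      fix r assume r: "r \<ge> t0"
      define n where "n = norm (z' r)"
      define p where "p = Cz * \<bar>eps' r\<bar>"
      have ep: "eps r > 0" using eps_pos[OF r] .
      have "0 \<le> (eps r * n - p)^2" by simp
      then have "2 * p * n * eps r \<le> (eps r * n)^2 + p^2" by (simp add: power2_eq_square algebra_simps)
      then have "2 * p * n \<le> eps r * n^2 + p^2 / eps r"
        using ep by (simp add: field_simps power2_eq_square)
      then show "F r \<le> Cz^2 * (\<bar>eps' r\<bar>^2 / eps r) - eps r * G r"
        unfolding F_def G_def n_def[symmetric] p_def by (simp add: power_mult_distrib algebra_simps)
    qed
  qed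
  have vlim: "((\<lambda>t. norm (z' t)) \<longlongrightarrow> 0) at_top"
    using tendsto_real_sqrt[OF Glim] unfolding G_def by (simp add: real_sqrt_abs)
  show ?thesis
  proof (intro ballI, clarify, intro conjI)
    fix xc lc assume xc: "xc \<in> opt_sol f A b" and lc: "lc \<in> lag_mult f gf A As b"
    have Axc: "A xc = b" using xc unfolding opt_sol_def by simp
    have glc: "gf xc + As lc = 0" using lc xc unfolding lag_mult_def by simp
    show "((\<lambda>t. norm (x' t, lam' t)) \<longlongrightarrow> 0) at_top" using vlim unfolding z'_def .
    define r1 where "r1 t = x' t + eps t *\<^sub>R x t" for t
    define r2 where "r2 t = lam' t + eps t *\<^sub>R lam t" for t
    define H where "H t = 2 * norm (z' t) + 2 * \<bar>eps t\<bar> * Cz" for t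
    have Hlim: "(H \<longlongrightarrow> 0) at_top"
    proof -
      have "((\<lambda>t. 2 * norm (z' t) + 2 * \<bar>eps t\<bar> * Cz) \<longlongrightarrow> 2 * 0 + 2 * \<bar>0\<bar> * Cz) at_top"
        by (intro tendsto_add tendsto_mult tendsto_const vlim tendsto_rabs eps_lim)
      then show ?thesis unfolding H_def by simp
    qed
    define Kgap where "Kgap = (Cz + norm xc) + Cz + norm lc"
    have gapb: "norm (lagr f A b (x t) lc - lagr f A b xc (lam t)) \<le> norm (H t) * Kgap" if t: "t \<ge> t0" for t
    proof -
      have ar2: "A (x t) - b = r2 t"
      proof -
        have "r2 t - (A (x t) - b) = lam' t + b - A (x t) + eps t *\<^sub>R lam t"
          unfolding r2_def by (simp add: algebra_simps)
        then show ?thesis using eq2[OF t] by simp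
      qed
      have ar1: "gf (x t) + As (lam t) = - r1 t"
      proof -
        have "gf (x t) + As (lam t) + r1 t = x' t + gf (x t) + As (lam t) + eps t *\<^sub>R x t"
          unfolding r1_def by (simp add: algebra_simps)
        then show ?thesis using eq1[OF t] by (simp add: eq_neg_iff_add_eq_0)
      qed
      have Ad: "A (x t - xc) = r2 t" using ar2 Axc Alin by simp
      have gap: "lagr f A b (x t) lc - lagr f A b xc (lam t) = f (x t) - f xc + inner lc (r2 t)"
        unfolding lagr_def using ar2 Axc by simp
      have low: "f (x t) - f xc \<ge> - inner lc (r2 t)"
      proof -
        have "f (x t) \<ge> f xc + inner (gf xc) (x t - xc)" by (rule grad_ineq[OF f_convex f_grad])
        moreover have "inner (gf xc) (x t - xc) = - inner lc (r2 t)"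
        proof -
          have "gf xc = - As lc" using glc by (simp add: eq_neg_iff_add_eq_0)
          then have "inner (gf xc) (x t - xc) = - inner (x t - xc) (As lc)" by (simp add: inner_commute)
          also have "\<dots> = - inner (A (x t - xc)) lc" by (simp add: As_adj)
          finally show ?thesis using Ad by (simp add: inner_commute)
        qed
        ultimately show ?thesis by linarith
      qed
      have up: "f (x t) - f xc \<le> - inner (r1 t) (x t - xc) - inner (r2 t) (lam t)"
      proof -
        have "f xc \<ge> f (x t) + inner (gf (x t)) (xc - x t)" by (rule grad_ineq[OF f_convex f_grad])
        moreover have "inner (gf (x t)) (xc - x t) = inner (r1 t) (x t - xc) + inner (r2 t) (lam t)"
        proof -
          have "gf (x t) = (gf (x t) + As (lam t)) - As (lam t)" by simp
          also have "\<dots> = - r1 t - As (lam t)" unfolding ar1 ..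
          finally have e: "gf (x t) = - r1 t - As (lam t)" .
          have "inner (gf (x t)) (xc - x t) = inner (r1 t) (x t - xc) + inner (x t - xc) (As (lam t))"
            unfolding e by (simp add: inner_diff_left inner_diff_right inner_commute algebra_simps)
          also have "inner (x t - xc) (As (lam t)) = inner (A (x t - xc)) (lam t)" by (simp add: As_adj)
          finally show ?thesis using Ad by simp
        qed
        ultimately show ?thesis by linarith
      qed
      have nr1: "norm (r1 t) \<le> norm (z' t) + \<bar>eps t\<bar> * Cz"
      proof -
        have "norm (r1 t) \<le> norm (x' t) + norm (eps t *\<^sub>R x t)" unfolding r1_def by (rule norm_triangle_ineq)
        moreover have "norm (x' t) \<le> norm (z' t)" unfolding z'_def by (rule norm_fst_le)
        moreover have "norm (eps t *\<^sub>R x t) \<le> \<bar>eps t\<bar> * Cz" using xb'[OF t] by (simp add: mult_left_mono)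
        ultimately show ?thesis by linarith
      qed
      have nr2: "norm (r2 t) \<le> norm (z' t) + \<bar>eps t\<bar> * Cz"
      proof -
        have "norm (r2 t) \<le> norm (lam' t) + norm (eps t *\<^sub>R lam t)" unfolding r2_def by (rule norm_triangle_ineq)
        moreover have "norm (lam' t) \<le> norm (z' t)" unfolding z'_def by (rule norm_snd_le)
        moreover have "norm (eps t *\<^sub>R lam t) \<le> \<bar>eps t\<bar> * Cz" using lb'[OF t] by (simp add: mult_left_mono)
        ultimately show ?thesis by linarith
      qed
      have H0: "H t \<ge> 0" unfolding H_def using Cz0 by simp
      have "- inner (r1 t) (x t - xc) \<le> norm (r1 t) * (Cz + norm xc)"
      proof -
        have "- inner (r1 t) (x t - xc) \<le> norm (r1 t) * norm (x t - xc)"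
          using Cauchy_Schwarz_ineq2[of "r1 t" "x t - xc"] by (simp add: abs_le_iff)
        moreover have "norm (x t - xc) \<le> Cz + norm xc"
          using norm_triangle_ineq4[of "x t" xc] xb'[OF t] by linarith
        ultimately show ?thesis by (meson mult_left_mono norm_ge_zero order_trans)
      qed
      moreover have "- inner (r2 t) (lam t) \<le> norm (r2 t) * Cz"
      proof -
        have "- inner (r2 t) (lam t) \<le> norm (r2 t) * norm (lam t)"
          using Cauchy_Schwarz_ineq2[of "r2 t" "lam t"] by (simp add: abs_le_iff)
        then show ?thesis using lb'[OF t] by (meson mult_left_mono norm_ge_zero order_trans)
      qed
      moreover have "inner lc (r2 t) \<le> norm (r2 t) * norm lc"
        using Cauchy_Schwarz_ineq2[of lc "r2 t"] by (simp add: abs_le_iff mult.commute)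
      moreover have "norm (r1 t) * (Cz + norm xc) + norm (r2 t) * Cz + norm (r2 t) * norm lc
          \<le> (norm (r1 t) + norm (r2 t)) * Kgap"
        unfolding Kgap_def using Cz0 by (simp add: algebra_simps mult_left_mono)
      moreover have "(norm (r1 t) + norm (r2 t)) * Kgap \<le> H t * Kgap"
        using nr1 nr2 Cz0 unfolding H_def Kgap_def by (intro mult_right_mono) auto
      ultimately have "lagr f A b (x t) lc - lagr f A b xc (lam t) \<le> H t * Kgap"
        using gap up by linarith
      moreover have "lagr f A b (x t) lc - lagr f A b xc (lam t) \<ge> 0" using gap low by linarith
      ultimately show ?thesis using H0 by simp
    qed
    show "((\<lambda>t. lagr f A b (x t) lc - lagr f A b xc (lam t)) \<longlongrightarrow> 0) at_top"
      by (rule tendsto_0_le[OF Hlim, of _ Kgap])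
        (use gapb in \<open>auto simp: eventually_at_top_linorder\<close>)
  qed
qed

end
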